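(* Let $\mathbb C$ be a homological category with finite colimits, and let $w\colon W\to A$, $x\colon X\to A$, $y\colon Y\to A$ be morphisms in $\mathbb C$ with $w$ a monomorphism. If $m\colon (W+X)\times_W(W+Y)\to A$ is an internal multiplication $X\times Y\to A$ over $(W,w)$, then $m\circ\ker(\gamma_w)=0$.
   Context: A homological category is a regular pointed category in which the Split Short Five Lemma holds. Notation: $\iota_i$ are coproduct injections, $[a,b]$ copairing, $\langle a,b\rangle$ pairing, $1$, $0$ identity and zero morphisms. $(W+X)\times_W(W+Y)$ is the pullback of $[1,0]\colon W+X\to W$ and $[1,0]\colon W+Y\to W$, with projections $\pi_1,\pi_2$. An internal multiplication $X\times Y\to A$ over $(W,w)$ is a morphism $m\colon (W+X)\times_W(W+Y)\to A$ with $m\langle 1,\iota_1[1,0]\rangle=[w,x]$ and $m\langle \iota_1[1,0],1\rangle=[w,y]$. $A_3=A\times_{A/X}A\times_{A/Y}A$ is the limit of $A\xrightarrow{\mathsf{coker}(x)}A/X\xleftarrow{\mathsf{coker}(x)}A\xrightarrow{\mathsf{coker}(y)}A/Y\xleftarrow{\mathsf{coker}(y)}A$, and $\gamma_w=\langle [w,x]\pi_1,[w,0]\pi_1,[w,y]\pi_2\rangle\colon (W+X)\times_W(W+Y)\to A_3$. *)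

theory Defs
  imports Main
begin

record ('o,'a) cat =
  Ob   :: "'o set"
  Ar   :: "'a set"
  Dom  :: "'a \<Rightarrow> 'o"
  Cod  :: "'a \<Rightarrow> 'o"
  Comp :: "'a \<Rightarrow> 'a \<Rightarrow> 'a"   (* Comp C g f = g \<circ> f, defined when Cod f = Dom g *)
  Id   :: "'o \<Rightarrow> 'a"

definition hom :: "('o,'a) cat \<Rightarrow> 'o \<Rightarrow> 'o \<Rightarrow> 'a set" where
  "hom C a b = {f \<in> Ar C. Dom C f = a \<and> Cod C f = b}"

definition category :: "('o,'a) cat \<Rightarrow> bool" where
  "category C \<longleftrightarrow>
     (\<forall>f\<in>Ar C. Dom C f \<in> Ob C \<and> Cod C f \<in> Ob C) \<and>
     (\<forall>a\<in>Ob C. Id C a \<in> hom C a a) \<and>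
     (\<forall>f g. f \<in> Ar C \<and> g \<in> Ar C \<and> Cod C f = Dom C g \<longrightarrow>
            Comp C g f \<in> hom C (Dom C f) (Cod C g)) \<and>
     (\<forall>f\<in>Ar C. Comp C f (Id C (Dom C f)) = f \<and> Comp C (Id C (Cod C f)) f = f) \<and>
     (\<forall>f g h. f \<in> Ar C \<and> g \<in> Ar C \<and> h \<in> Ar C \<and> Cod C f = Dom C g \<and> Cod C g = Dom C h \<longrightarrow>
            Comp C h (Comp C g f) = Comp C (Comp C h g) f)"

definition iso :: "('o,'a) cat \<Rightarrow> 'a \<Rightarrow> bool" where
  "iso C f \<longleftrightarrow> f \<in> Ar C \<and> (\<exists>g\<in>hom C (Cod C f) (Dom C f).
       Comp C g f = Id C (Dom C f) \<and> Comp C f g = Id C (Cod C f))"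

definition mono :: "('o,'a) cat \<Rightarrow> 'a \<Rightarrow> bool" where
  "mono C f \<longleftrightarrow> f \<in> Ar C \<and> (\<forall>g h. g \<in> Ar C \<and> h \<in> Ar C \<and> Cod C g = Dom C f \<and>
       Cod C h = Dom C f \<and> Dom C g = Dom C h \<and> Comp C f g = Comp C f h \<longrightarrow> g = h)"

definition terminal :: "('o,'a) cat \<Rightarrow> 'o \<Rightarrow> bool" where
  "terminal C t \<longleftrightarrow> t \<in> Ob C \<and> (\<forall>a\<in>Ob C. \<exists>!f. f \<in> hom C a t)"

definition initial :: "('o,'a) cat \<Rightarrow> 'o \<Rightarrow> bool" where
  "initial C t \<longleftrightarrow> t \<in> Ob C \<and> (\<forall>a\<in>Ob C. \<exists>!f. f \<in> hom C t a)"

definition zero_obj :: "('o,'a) cat \<Rightarrow> 'o \<Rightarrow> bool" where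
  "zero_obj C z \<longleftrightarrow> initial C z \<and> terminal C z"

definition pointed :: "('o,'a) cat \<Rightarrow> bool" where
  "pointed C \<longleftrightarrow> category C \<and> (\<exists>z. zero_obj C z)"

definition zero_map :: "('o,'a) cat \<Rightarrow> 'a \<Rightarrow> bool" where
  "zero_map C f \<longleftrightarrow> f \<in> Ar C \<and> (\<exists>z g h. zero_obj C z \<and> g \<in> hom C (Dom C f) z \<and>
       h \<in> hom C z (Cod C f) \<and> f = Comp C h g)"

text \<open>The zero morphism a \<rightarrow> b (unique in a pointed category).\<close>
definition zero_ar :: "('o,'a) cat \<Rightarrow> 'o \<Rightarrow> 'o \<Rightarrow> 'a" where
  "zero_ar C a b = (THE f. f \<in> hom C a b \<and> zero_map C f)"

definition is_pullback :: "('o,'a) cat \<Rightarrow> 'a \<Rightarrow> 'a \<Rightarrow> 'o \<Rightarrow> 'a \<Rightarrow> 'a \<Rightarrow> bool" where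
  "is_pullback C f g P p1 p2 \<longleftrightarrow>
     f \<in> Ar C \<and> g \<in> Ar C \<and> Cod C f = Cod C g \<and> P \<in> Ob C \<and>
     p1 \<in> hom C P (Dom C f) \<and> p2 \<in> hom C P (Dom C g) \<and> Comp C f p1 = Comp C g p2 \<and>
     (\<forall>Q q1 q2. Q \<in> Ob C \<and> q1 \<in> hom C Q (Dom C f) \<and> q2 \<in> hom C Q (Dom C g) \<and>
        Comp C f q1 = Comp C g q2 \<longrightarrow>
        (\<exists>!u. u \<in> hom C Q P \<and> Comp C p1 u = q1 \<and> Comp C p2 u = q2))"

definition is_coproduct :: "('o,'a) cat \<Rightarrow> 'o \<Rightarrow> 'o \<Rightarrow> 'o \<Rightarrow> 'a \<Rightarrow> 'a \<Rightarrow> bool" where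
  "is_coproduct C a b S i1 i2 \<longleftrightarrow>
     a \<in> Ob C \<and> b \<in> Ob C \<and> S \<in> Ob C \<and> i1 \<in> hom C a S \<and> i2 \<in> hom C b S \<and>
     (\<forall>Q f g. Q \<in> Ob C \<and> f \<in> hom C a Q \<and> g \<in> hom C b Q \<longrightarrow>
        (\<exists>!h. h \<in> hom C S Q \<and> Comp C h i1 = f \<and> Comp C h i2 = g))"

definition is_coequalizer :: "('o,'a) cat \<Rightarrow> 'a \<Rightarrow> 'a \<Rightarrow> 'o \<Rightarrow> 'a \<Rightarrow> bool" where
  "is_coequalizer C f g E e \<longleftrightarrow>
     f \<in> Ar C \<and> g \<in> Ar C \<and> Dom C f = Dom C g \<and> Cod C f = Cod C g \<and> E \<in> Ob C \<and>
     e \<in> hom C (Cod C f) E \<and> Comp C e f = Comp C e g \<and>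
     (\<forall>Q q. Q \<in> Ob C \<and> q \<in> hom C (Cod C f) Q \<and> Comp C q f = Comp C q g \<longrightarrow>
        (\<exists>!u. u \<in> hom C E Q \<and> Comp C u e = q))"

definition is_kernel :: "('o,'a) cat \<Rightarrow> 'a \<Rightarrow> 'o \<Rightarrow> 'a \<Rightarrow> bool" where
  "is_kernel C f K k \<longleftrightarrow>
     f \<in> Ar C \<and> K \<in> Ob C \<and> k \<in> hom C K (Dom C f) \<and> zero_map C (Comp C f k) \<and>
     (\<forall>Q q. Q \<in> Ob C \<and> q \<in> hom C Q (Dom C f) \<and> zero_map C (Comp C f q) \<longrightarrow>
        (\<exists>!u. u \<in> hom C Q K \<and> Comp C k u = q))"

definition is_cokernel :: "('o,'a) cat \<Rightarrow> 'a \<Rightarrow> 'o \<Rightarrow> 'a \<Rightarrow> bool" where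
  "is_cokernel C f Q c \<longleftrightarrow>
     f \<in> Ar C \<and> Q \<in> Ob C \<and> c \<in> hom C (Cod C f) Q \<and> zero_map C (Comp C c f) \<and>
     (\<forall>R r. R \<in> Ob C \<and> r \<in> hom C (Cod C f) R \<and> zero_map C (Comp C r f) \<longrightarrow>
        (\<exists>!u. u \<in> hom C Q R \<and> Comp C u c = r))"

definition has_finite_limits :: "('o,'a) cat \<Rightarrow> bool" where
  "has_finite_limits C \<longleftrightarrow> (\<exists>t. terminal C t) \<and>
     (\<forall>f g. f \<in> Ar C \<and> g \<in> Ar C \<and> Cod C f = Cod C g \<longrightarrow> (\<exists>P p1 p2. is_pullback C f g P p1 p2))"

definition has_finite_colimits :: "('o,'a) cat \<Rightarrow> bool" where
  "has_finite_colimits C \<longleftrightarrow> (\<exists>i. initial C i) \<and>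
     (\<forall>a b. a \<in> Ob C \<and> b \<in> Ob C \<longrightarrow> (\<exists>S i1 i2. is_coproduct C a b S i1 i2)) \<and>
     (\<forall>f g. f \<in> Ar C \<and> g \<in> Ar C \<and> Dom C f = Dom C g \<and> Cod C f = Cod C g \<longrightarrow>
        (\<exists>E e. is_coequalizer C f g E e))"

definition regular_epi :: "('o,'a) cat \<Rightarrow> 'a \<Rightarrow> bool" where
  "regular_epi C e \<longleftrightarrow> (\<exists>f g. is_coequalizer C f g (Cod C e) e)"

definition regular :: "('o,'a) cat \<Rightarrow> bool" where
  "regular C \<longleftrightarrow> category C \<and> has_finite_limits C \<and>
     (\<forall>f P p1 p2. is_pullback C f f P p1 p2 \<longrightarrow> (\<exists>E e. is_coequalizer C p1 p2 E e)) \<and>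
     (\<forall>f g P p1 p2. is_pullback C f g P p1 p2 \<and> regular_epi C f \<longrightarrow> regular_epi C p2)"

definition split_short_five :: "('o,'a) cat \<Rightarrow> bool" where
  "split_short_five C \<longleftrightarrow>
     (\<forall>K A B k p s K' A' B' k' p' s' u v w.
        is_kernel C p K k \<and> p \<in> hom C A B \<and> s \<in> hom C B A \<and> Comp C p s = Id C B \<and>
        is_kernel C p' K' k' \<and> p' \<in> hom C A' B' \<and> s' \<in> hom C B' A' \<and> Comp C p' s' = Id C B' \<and>
        u \<in> hom C K K' \<and> v \<in> hom C A A' \<and> w \<in> hom C B B' \<and>
        Comp C v k = Comp C k' u \<and> Comp C p' v = Comp C w p \<and> Comp C v s = Comp C s' w \<and>
        iso C u \<and> iso C w \<longrightarrow> iso C v)"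

definition homological :: "('o,'a) cat \<Rightarrow> bool" where
  "homological C \<longleftrightarrow> regular C \<and> pointed C \<and> split_short_five C"

definition copair :: "('o,'a) cat \<Rightarrow> 'a \<Rightarrow> 'a \<Rightarrow> 'a \<Rightarrow> 'a \<Rightarrow> 'a" where
  "copair C i1 i2 f g = (THE h. h \<in> hom C (Cod C i1) (Cod C f) \<and> Comp C h i1 = f \<and> Comp C h i2 = g)"

definition pair :: "('o,'a) cat \<Rightarrow> 'a \<Rightarrow> 'a \<Rightarrow> 'a \<Rightarrow> 'a \<Rightarrow> 'a" where
  "pair C p1 p2 f g = (THE u. u \<in> hom C (Dom C f) (Dom C p1) \<and> Comp C p1 u = f \<and> Comp C p2 u = g)"

text \<open>A_3 = A \<times>_{A/X} A \<times>_{A/Y} A: limit of A -cx-> A/X <-cx- A -cy-> A/Y <-cy- A.\<close>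
definition is_A3 :: "('o,'a) cat \<Rightarrow> 'a \<Rightarrow> 'a \<Rightarrow> 'o \<Rightarrow> 'a \<Rightarrow> 'a \<Rightarrow> 'a \<Rightarrow> bool" where
  "is_A3 C cx cy L q1 q2 q3 \<longleftrightarrow>
     cx \<in> Ar C \<and> cy \<in> Ar C \<and> Dom C cx = Dom C cy \<and> L \<in> Ob C \<and>
     q1 \<in> hom C L (Dom C cx) \<and> q2 \<in> hom C L (Dom C cx) \<and> q3 \<in> hom C L (Dom C cx) \<and>
     Comp C cx q1 = Comp C cx q2 \<and> Comp C cy q2 = Comp C cy q3 \<and>
     (\<forall>Q r1 r2 r3. Q \<in> Ob C \<and> r1 \<in> hom C Q (Dom C cx) \<and> r2 \<in> hom C Q (Dom C cx) \<and>
        r3 \<in> hom C Q (Dom C cx) \<and> Comp C cx r1 = Comp C cx r2 \<and> Comp C cy r2 = Comp C cy r3 \<longrightarrow>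
        (\<exists>!u. u \<in> hom C Q L \<and> Comp C q1 u = r1 \<and> Comp C q2 u = r2 \<and> Comp C q3 u = r3))"

definition triple :: "('o,'a) cat \<Rightarrow> 'a \<Rightarrow> 'a \<Rightarrow> 'a \<Rightarrow> 'a \<Rightarrow> 'a \<Rightarrow> 'a \<Rightarrow> 'a" where
  "triple C q1 q2 q3 f g h = (THE u. u \<in> hom C (Dom C f) (Dom C q1) \<and>
       Comp C q1 u = f \<and> Comp C q2 u = g \<and> Comp C q3 u = h)"

text \<open>Data: coproducts (WX,i1,i2) = W+X and (WY,j1,j2) = W+Y, and the pullback
  (P,p1,p2) of [1,0] : W+X \<rightarrow> W and [1,0] : W+Y \<rightarrow> W.\<close>
definition internal_mult ::
  "('o,'a) cat \<Rightarrow> 'o \<Rightarrow> 'a \<Rightarrow> 'o \<Rightarrow> 'a \<Rightarrow> 'o \<Rightarrow> 'a \<Rightarrow> 'o \<Rightarrow> 'o \<Rightarrow> 'a \<Rightarrow> 'a \<Rightarrow> 'o \<Rightarrow> 'a \<Rightarrow> 'a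
   \<Rightarrow> 'o \<Rightarrow> 'a \<Rightarrow> 'a \<Rightarrow> 'a \<Rightarrow> bool" where
  "internal_mult C A w W x X y Y WX i1 i2 WY j1 j2 P p1 p2 m \<longleftrightarrow>
     m \<in> hom C P A \<and>
     Comp C m (pair C p1 p2 (Id C WX) (Comp C j1 (copair C i1 i2 (Id C W) (zero_ar C X W))))
       = copair C i1 i2 w x \<and>
     Comp C m (pair C p1 p2 (Comp C i1 (copair C j1 j2 (Id C W) (zero_ar C Y W))) (Id C WY))
       = copair C j1 j2 w y"

definition gamma ::
  "('o,'a) cat \<Rightarrow> 'o \<Rightarrow> 'a \<Rightarrow> 'o \<Rightarrow> 'a \<Rightarrow> 'o \<Rightarrow> 'a \<Rightarrow> 'a \<Rightarrow> 'a \<Rightarrow> 'a \<Rightarrow> 'a \<Rightarrow> 'a \<Rightarrow> 'a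
   \<Rightarrow> 'a \<Rightarrow> 'a \<Rightarrow> 'a \<Rightarrow> 'a" where
  "gamma C A w X x Y y i1 i2 j1 j2 p1 p2 q1 q2 q3 =
     triple C q1 q2 q3 (Comp C (copair C i1 i2 w x) p1)
                       (Comp C (copair C i1 i2 w (zero_ar C X A)) p1)
                       (Comp C (copair C j1 j2 w y) p2)"

end

theory Submission
  imports Defs
begin

locale hc =
  fixes C :: "('o,'a) cat"
  assumes H: "homological C"
begin

lemma cat: "category C" using H unfolding homological_def regular_def by auto
lemma fl: "has_finite_limits C" using H unfolding homological_def regular_def by auto
lemma ssf: "split_short_five C" using H unfolding homological_def by auto
lemma ptd: "\<exists>z. zero_obj C z" using H unfolding homological_def pointed_def by auto

abbreviation cp (infixr "\<cdot>" 55) where "g \<cdot> f \<equiv> Comp C g f"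
abbreviation Z where "Z a b \<equiv> zero_ar C a b"

lemma homD: "f \<in> hom C a b \<Longrightarrow> f \<in> Ar C \<and> Dom C f = a \<and> Cod C f = b" by (simp add: hom_def)
lemma homI: "f \<in> Ar C \<Longrightarrow> Dom C f = a \<Longrightarrow> Cod C f = b \<Longrightarrow> f \<in> hom C a b" by (simp add: hom_def)
lemma dom_ob[simp]: "f \<in> Ar C \<Longrightarrow> Dom C f \<in> Ob C" using cat unfolding category_def by auto
lemma cod_ob[simp]: "f \<in> Ar C \<Longrightarrow> Cod C f \<in> Ob C" using cat unfolding category_def by auto
lemma comp_hom: "f \<in> Ar C \<Longrightarrow> g \<in> Ar C \<Longrightarrow> Cod C f = Dom C g \<Longrightarrow> g \<cdot> f \<in> hom C (Dom C f) (Cod C g)"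
  using cat unfolding category_def by auto
lemma comp_ar[simp]: "f \<in> Ar C \<Longrightarrow> g \<in> Ar C \<Longrightarrow> Cod C f = Dom C g \<Longrightarrow> g \<cdot> f \<in> Ar C"
  using comp_hom homD by blast
lemma comp_dom[simp]: "f \<in> Ar C \<Longrightarrow> g \<in> Ar C \<Longrightarrow> Cod C f = Dom C g \<Longrightarrow> Dom C (g \<cdot> f) = Dom C f"
  using comp_hom homD by blast
lemma comp_cod[simp]: "f \<in> Ar C \<Longrightarrow> g \<in> Ar C \<Longrightarrow> Cod C f = Dom C g \<Longrightarrow> Cod C (g \<cdot> f) = Cod C g"
  using comp_hom homD by blast
lemma assoc[simp]: "f \<in> Ar C \<Longrightarrow> g \<in> Ar C \<Longrightarrow> h \<in> Ar C \<Longrightarrow> Cod C f = Dom C g \<Longrightarrow> Cod C g = Dom C h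
   \<Longrightarrow> (h \<cdot> g) \<cdot> f = h \<cdot> (g \<cdot> f)"
  using cat unfolding category_def by metis
lemma id_hom: "a \<in> Ob C \<Longrightarrow> Id C a \<in> hom C a a" using cat unfolding category_def by auto
lemma id_ar[simp]: "a \<in> Ob C \<Longrightarrow> Id C a \<in> Ar C" using id_hom homD by blast
lemma id_dom[simp]: "a \<in> Ob C \<Longrightarrow> Dom C (Id C a) = a" using id_hom homD by blast
lemma id_cod[simp]: "a \<in> Ob C \<Longrightarrow> Cod C (Id C a) = a" using id_hom homD by blast
lemma id_l[simp]: "f \<in> Ar C \<Longrightarrow> Cod C f = a \<Longrightarrow> Id C a \<cdot> f = f" using cat unfolding category_def by auto
lemma id_r[simp]: "f \<in> Ar C \<Longrightarrow> Dom C f = a \<Longrightarrow> f \<cdot> Id C a = f" using cat unfolding category_def by auto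

lemma hom_ob1: "f \<in> hom C a b \<Longrightarrow> a \<in> Ob C" using homD dom_ob by blast
lemma hom_ob2: "f \<in> hom C a b \<Longrightarrow> b \<in> Ob C" using homD cod_ob by blast

lemma zero_maps_eq:
  assumes "zero_map C f" "zero_map C g" "Dom C f = Dom C g" "Cod C f = Cod C g"
  shows "f = g"
proof -
  obtain z g1 h1 where z: "zero_obj C z" "g1 \<in> hom C (Dom C f) z" "h1 \<in> hom C z (Cod C f)" "f = h1 \<cdot> g1"
    using assms(1) unfolding zero_map_def by blast
  obtain z' g2 h2 where z': "zero_obj C z'" "g2 \<in> hom C (Dom C g) z'" "h2 \<in> hom C z' (Cod C g)" "g = h2 \<cdot> g2"
    using assms(2) unfolding zero_map_def by blast
  have zo: "z \<in> Ob C" "z' \<in> Ob C" using z z' unfolding zero_obj_def initial_def by auto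
  have tz': "\<forall>a\<in>Ob C. \<exists>!f. f \<in> hom C a z'" using z'(1) unfolding zero_obj_def terminal_def by blast
  have iz: "\<forall>a\<in>Ob C. \<exists>!f. f \<in> hom C z a" using z(1) unfolding zero_obj_def initial_def by blast
  obtain u where u: "u \<in> hom C z z'" using tz' zo by blast
  have a1: "u \<cdot> g1 \<in> hom C (Dom C f) z'" using u z(2) comp_hom homD by metis
  have a2: "g2 \<in> hom C (Dom C f) z'" using z'(2) assms(3) by simp
  have e1: "u \<cdot> g1 = g2" using tz' a1 a2 hom_ob1[OF a1] by blast
  have b1: "h2 \<cdot> u \<in> hom C z (Cod C f)" using u z'(3) assms(4) comp_hom homD by metis
  have e2: "h2 \<cdot> u = h1" using iz b1 z(3) hom_ob2[OF z(3)] by blast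
  have "f = (h2 \<cdot> u) \<cdot> g1" using e2 z(4) by simp
  also have "\<dots> = h2 \<cdot> (u \<cdot> g1)" using u z(2) z'(3) homD by (intro assoc) auto
  finally show ?thesis using e1 z'(4) by simp
qed

lemma zero_ex: assumes "a \<in> Ob C" "b \<in> Ob C" shows "\<exists>f. f \<in> hom C a b \<and> zero_map C f"
proof -
  obtain z where z: "zero_obj C z" using ptd by blast
  have tz: "\<forall>a\<in>Ob C. \<exists>!f. f \<in> hom C a z" using z unfolding zero_obj_def terminal_def by blast
  have iz: "\<forall>a\<in>Ob C. \<exists>!f. f \<in> hom C z a" using z unfolding zero_obj_def initial_def by blast
  obtain g where g: "g \<in> hom C a z" using tz assms by blast
  obtain h where h: "h \<in> hom C z b" using iz assms by blast
  have hg: "h \<cdot> g \<in> hom C a b" using g h comp_hom homD by metis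
  have "zero_map C (h \<cdot> g)" unfolding zero_map_def
  proof (intro conjI exI)
    show "h \<cdot> g \<in> Ar C" using hg homD by blast
    show "zero_obj C z" by fact
    show "g \<in> hom C (Dom C (h \<cdot> g)) z" using g hg homD by metis
    show "h \<in> hom C z (Cod C (h \<cdot> g))" using h hg homD by metis
  qed simp
  with hg show ?thesis by blast
qed

lemma Z_prop: assumes "a \<in> Ob C" "b \<in> Ob C" shows "Z a b \<in> hom C a b \<and> zero_map C (Z a b)"
proof -
  obtain f where f: "f \<in> hom C a b" "zero_map C f" using zero_ex assms by blast
  have "\<exists>!f. f \<in> hom C a b \<and> zero_map C f"
  proof (rule ex1I[of _ f])
    fix g assume "g \<in> hom C a b \<and> zero_map C g"
    thus "g = f" using f zero_maps_eq[of g f] homD by metis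
  qed (use f in blast)
  thus ?thesis unfolding zero_ar_def by (rule theI')
qed

lemma Z_ar[simp]: "a \<in> Ob C \<Longrightarrow> b \<in> Ob C \<Longrightarrow> Z a b \<in> Ar C" using Z_prop homD by blast
lemma Z_dom[simp]: "a \<in> Ob C \<Longrightarrow> b \<in> Ob C \<Longrightarrow> Dom C (Z a b) = a" using Z_prop homD by blast
lemma Z_cod[simp]: "a \<in> Ob C \<Longrightarrow> b \<in> Ob C \<Longrightarrow> Cod C (Z a b) = b" using Z_prop homD by blast

lemma zero_iff: assumes "f \<in> hom C a b" shows "zero_map C f \<longleftrightarrow> f = Z a b"
proof -
  have ob: "a \<in> Ob C" "b \<in> Ob C" using hom_ob1 hom_ob2 assms by auto
  show ?thesis
  proof
    assume "zero_map C f" thus "f = Z a b" using zero_maps_eq[of f "Z a b"] Z_prop[OF ob] assms homD by metis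
  qed (use Z_prop[OF ob] in simp)
qed

lemma zero_comp_l: assumes "zero_map C f" "g \<in> Ar C" "Cod C f = Dom C g" shows "zero_map C (g \<cdot> f)"
proof -
  obtain z g1 h1 where z: "zero_obj C z" "g1 \<in> hom C (Dom C f) z" "h1 \<in> hom C z (Cod C f)" "f = h1 \<cdot> g1"
    using assms(1) unfolding zero_map_def by blast
  have f: "f \<in> Ar C" using assms(1) unfolding zero_map_def by blast
  have hh: "h1 \<in> Ar C" "Dom C h1 = z" "Cod C h1 = Cod C f" "g1 \<in> Ar C" "Dom C g1 = Dom C f" "Cod C g1 = z"
    using homD[OF z(2)] homD[OF z(3)] by auto
  have e: "g \<cdot> f = (g \<cdot> h1) \<cdot> g1" unfolding z(4) by (rule assoc[symmetric]) (use hh assms in auto)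
  show ?thesis unfolding zero_map_def
  proof (intro conjI exI)
    show "g \<cdot> f \<in> Ar C" using f assms by simp
    show "zero_obj C z" by fact
    show "g1 \<in> hom C (Dom C (g \<cdot> f)) z" using hh f assms homI by simp
    show "g \<cdot> h1 \<in> hom C z (Cod C (g \<cdot> f))" using hh f assms homI by simp
  qed fact
qed

lemma zero_comp_r: assumes "zero_map C f" "g \<in> Ar C" "Cod C g = Dom C f" shows "zero_map C (f \<cdot> g)"
proof -
  obtain z g1 h1 where z: "zero_obj C z" "g1 \<in> hom C (Dom C f) z" "h1 \<in> hom C z (Cod C f)" "f = h1 \<cdot> g1"
    using assms(1) unfolding zero_map_def by blast
  have f: "f \<in> Ar C" using assms(1) unfolding zero_map_def by blast
  have hh: "h1 \<in> Ar C" "Dom C h1 = z" "Cod C h1 = Cod C f" "g1 \<in> Ar C" "Dom C g1 = Dom C f" "Cod C g1 = z"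
    using homD[OF z(2)] homD[OF z(3)] by auto
  have e: "f \<cdot> g = h1 \<cdot> (g1 \<cdot> g)" unfolding z(4) by (rule assoc) (use hh assms in auto)
  show ?thesis unfolding zero_map_def
  proof (intro conjI exI)
    show "f \<cdot> g \<in> Ar C" using f assms by simp
    show "zero_obj C z" by fact
    show "g1 \<cdot> g \<in> hom C (Dom C (f \<cdot> g)) z" using hh f assms homI by simp
    show "h1 \<in> hom C z (Cod C (f \<cdot> g))" using hh f assms homI by simp
  qed fact
qed

lemma Z_l[simp]: assumes "g \<in> Ar C" "Dom C g = b" "a \<in> Ob C" shows "g \<cdot> Z a b = Z a (Cod C g)"
proof -
  have b: "b \<in> Ob C" using assms by auto
  have "zero_map C (g \<cdot> Z a b)" using zero_comp_l[of "Z a b" g] Z_prop[OF assms(3) b] assms b by simp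
  moreover have "g \<cdot> Z a b \<in> hom C a (Cod C g)" using assms b homI by simp
  ultimately show ?thesis using zero_iff by blast
qed
lemma Z_r[simp]: assumes "f \<in> Ar C" "Cod C f = b" "c \<in> Ob C" shows "Z b c \<cdot> f = Z (Dom C f) c"
proof -
  have b: "b \<in> Ob C" using assms by auto
  have "zero_map C (Z b c \<cdot> f)" using zero_comp_r[of "Z b c" f] Z_prop[OF b assms(3)] assms b by simp
  moreover have "Z b c \<cdot> f \<in> hom C (Dom C f) c" using assms b homI by simp
  ultimately show ?thesis using zero_iff by blast
qed

lemma monoD: "mono C f \<Longrightarrow> g \<in> Ar C \<Longrightarrow> h \<in> Ar C \<Longrightarrow> Cod C g = Dom C f \<Longrightarrow> Cod C h = Dom C f
  \<Longrightarrow> Dom C g = Dom C h \<Longrightarrow> f \<cdot> g = f \<cdot> h \<Longrightarrow> g = h"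
  unfolding mono_def by blast


lemma copair:
  assumes cp: "is_coproduct C a b S i1 i2" and f: "f \<in> hom C a Q" and g: "g \<in> hom C b Q"
  shows "copair C i1 i2 f g \<in> hom C S Q \<and> copair C i1 i2 f g \<cdot> i1 = f \<and> copair C i1 i2 f g \<cdot> i2 = g"
proof -
  have Q: "Q \<in> Ob C" using hom_ob2 f by blast
  have ex: "\<exists>!h. h \<in> hom C S Q \<and> h \<cdot> i1 = f \<and> h \<cdot> i2 = g" using cp f g Q unfolding is_coproduct_def by blast
  have "Cod C i1 = S" "Cod C f = Q" using cp f homD unfolding is_coproduct_def by auto
  thus ?thesis using theI'[OF ex] unfolding copair_def by simp
qed

lemma copair_unique:
  assumes cp: "is_coproduct C a b S i1 i2" and h: "h \<in> hom C S Q"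
  shows "copair C i1 i2 (h \<cdot> i1) (h \<cdot> i2) = h"
proof -
  have i: "i1 \<in> hom C a S" "i2 \<in> hom C b S" using cp unfolding is_coproduct_def by auto
  have f: "h \<cdot> i1 \<in> hom C a Q" "h \<cdot> i2 \<in> hom C b Q" using i h comp_hom homD by metis+
  have Q: "Q \<in> Ob C" using hom_ob2 h by blast
  have ex: "\<exists>!u. u \<in> hom C S Q \<and> u \<cdot> i1 = h \<cdot> i1 \<and> u \<cdot> i2 = h \<cdot> i2" using cp f Q unfolding is_coproduct_def by blast
  have "Cod C i1 = S" "Cod C (h \<cdot> i1) = Q" using i f homD by auto
  thus ?thesis unfolding copair_def using the1_equality[OF ex] h by simp
qed

lemma pair:
  assumes pb: "is_pullback C f g P p1 p2" and u1: "u1 \<in> hom C Q (Dom C f)" and u2: "u2 \<in> hom C Q (Dom C g)"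
    and eq: "f \<cdot> u1 = g \<cdot> u2"
  shows "pair C p1 p2 u1 u2 \<in> hom C Q P \<and> p1 \<cdot> pair C p1 p2 u1 u2 = u1 \<and> p2 \<cdot> pair C p1 p2 u1 u2 = u2"
proof -
  have Q: "Q \<in> Ob C" using hom_ob1 u1 by blast
  have ex: "\<exists>!u. u \<in> hom C Q P \<and> p1 \<cdot> u = u1 \<and> p2 \<cdot> u = u2" using pb u1 u2 Q eq unfolding is_pullback_def by blast
  have "Dom C u1 = Q" "Dom C p1 = P" using pb u1 homD unfolding is_pullback_def by auto
  thus ?thesis using theI'[OF ex] unfolding pair_def by simp
qed

lemma pb_props:
  assumes pb: "is_pullback C f g P p1 p2"
  shows "p1 \<in> hom C P (Dom C f)" "p2 \<in> hom C P (Dom C g)" "f \<cdot> p1 = g \<cdot> p2" "f \<in> Ar C" "g \<in> Ar C" "Cod C f = Cod C g"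
  using pb unfolding is_pullback_def by auto

lemma pb_eq:
  assumes pb: "is_pullback C f g P p1 p2" and h: "h \<in> hom C Q P" and h': "h' \<in> hom C Q P"
    and e1: "p1 \<cdot> h = p1 \<cdot> h'" and e2: "p2 \<cdot> h = p2 \<cdot> h'"
  shows "h = h'"
proof -
  note pp = pb_props[OF pb]
  have Q: "Q \<in> Ob C" using hom_ob1 h by blast
  have u1: "p1 \<cdot> h \<in> hom C Q (Dom C f)" and u2: "p2 \<cdot> h \<in> hom C Q (Dom C g)"
    using pp(1,2) h comp_hom homD by metis+
  have "f \<cdot> (p1 \<cdot> h) = g \<cdot> (p2 \<cdot> h)"
  proof -
    have "f \<cdot> (p1 \<cdot> h) = (f \<cdot> p1) \<cdot> h" using pp h homD by (intro assoc[symmetric]) auto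
    also have "\<dots> = (g \<cdot> p2) \<cdot> h" using pp by simp
    also have "\<dots> = g \<cdot> (p2 \<cdot> h)" using pp h homD by (intro assoc) auto
    finally show ?thesis .
  qed
  hence ex: "\<exists>!u. u \<in> hom C Q P \<and> p1 \<cdot> u = p1 \<cdot> h \<and> p2 \<cdot> u = p2 \<cdot> h" using pb u1 u2 Q unfolding is_pullback_def by blast
  show ?thesis using ex h h' e1 e2 by metis
qed

lemma triple:
  assumes L: "is_A3 C cx cy L q1 q2 q3" and r: "r1 \<in> hom C Q (Dom C cx)" "r2 \<in> hom C Q (Dom C cx)" "r3 \<in> hom C Q (Dom C cx)"
    and e: "cx \<cdot> r1 = cx \<cdot> r2" "cy \<cdot> r2 = cy \<cdot> r3"
  shows "triple C q1 q2 q3 r1 r2 r3 \<in> hom C Q L \<and> q1 \<cdot> triple C q1 q2 q3 r1 r2 r3 = r1 \<and>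
         q2 \<cdot> triple C q1 q2 q3 r1 r2 r3 = r2 \<and> q3 \<cdot> triple C q1 q2 q3 r1 r2 r3 = r3"
proof -
  have Q: "Q \<in> Ob C" using hom_ob1 r(1) by blast
  have ex: "\<exists>!u. u \<in> hom C Q L \<and> q1 \<cdot> u = r1 \<and> q2 \<cdot> u = r2 \<and> q3 \<cdot> u = r3" using L r e Q unfolding is_A3_def by blast
  have "Dom C r1 = Q" "Dom C q1 = L" using L r homD unfolding is_A3_def by auto
  thus ?thesis using theI'[OF ex] unfolding triple_def by simp
qed

lemma A3_props:
  assumes L: "is_A3 C cx cy L q1 q2 q3"
  shows "q1 \<in> hom C L (Dom C cx)" "q2 \<in> hom C L (Dom C cx)" "q3 \<in> hom C L (Dom C cx)"
    "cx \<cdot> q1 = cx \<cdot> q2" "cy \<cdot> q2 = cy \<cdot> q3" "cx \<in> Ar C" "cy \<in> Ar C" "Dom C cx = Dom C cy"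
  using L unfolding is_A3_def by auto

lemma A3_eq:
  assumes L: "is_A3 C cx cy L q1 q2 q3" and h: "h \<in> hom C Q L" and h': "h' \<in> hom C Q L"
    and e1: "q1 \<cdot> h = q1 \<cdot> h'" and e2: "q2 \<cdot> h = q2 \<cdot> h'" and e3: "q3 \<cdot> h = q3 \<cdot> h'"
  shows "h = h'"
proof -
  note pp = A3_props[OF L]
  have Q: "Q \<in> Ob C" using hom_ob1 h by blast
  have r: "q1 \<cdot> h \<in> hom C Q (Dom C cx)" "q2 \<cdot> h \<in> hom C Q (Dom C cx)" "q3 \<cdot> h \<in> hom C Q (Dom C cx)"
    using pp(1,2,3) h comp_hom homD by metis+
  have "cx \<cdot> (q1 \<cdot> h) = cx \<cdot> (q2 \<cdot> h)"
  proof -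
    have "cx \<cdot> (q1 \<cdot> h) = (cx \<cdot> q1) \<cdot> h" using pp h homD by (intro assoc[symmetric]) auto
    also have "\<dots> = (cx \<cdot> q2) \<cdot> h" using pp by simp
    also have "\<dots> = cx \<cdot> (q2 \<cdot> h)" using pp h homD by (intro assoc) auto
    finally show ?thesis .
  qed
  moreover have "cy \<cdot> (q2 \<cdot> h) = cy \<cdot> (q3 \<cdot> h)"
  proof -
    have "cy \<cdot> (q2 \<cdot> h) = (cy \<cdot> q2) \<cdot> h" using pp h homD by (intro assoc[symmetric]) auto
    also have "\<dots> = (cy \<cdot> q3) \<cdot> h" using pp by simp
    also have "\<dots> = cy \<cdot> (q3 \<cdot> h)" using pp h homD by (intro assoc) auto
    finally show ?thesis .
  qed
  ultimately have ex: "\<exists>!u. u \<in> hom C Q L \<and> q1 \<cdot> u = q1 \<cdot> h \<and> q2 \<cdot> u = q2 \<cdot> h \<and> q3 \<cdot> u = q3 \<cdot> h"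
    using L r Q unfolding is_A3_def by blast
  show ?thesis using ex h h' e1 e2 e3 by metis
qed

lemma ker_props:
  assumes "is_kernel C f K k" shows "k \<in> hom C K (Dom C f)" "zero_map C (f \<cdot> k)" "f \<in> Ar C" "K \<in> Ob C"
  using assms unfolding is_kernel_def by auto

lemma ker_factor:
  assumes "is_kernel C f K k" "q \<in> hom C Q (Dom C f)" "zero_map C (f \<cdot> q)"
  shows "\<exists>u. u \<in> hom C Q K \<and> k \<cdot> u = q"
  using assms hom_ob1[OF assms(2)] unfolding is_kernel_def by blast

lemma ker_mono:
  assumes kk: "is_kernel C f K k" and g: "g \<in> hom C Q K" and h: "h \<in> hom C Q K" and e: "k \<cdot> g = k \<cdot> h"
  shows "g = h"
proof -
  note kp = ker_props[OF kk]
  have Q: "Q \<in> Ob C" using hom_ob1 g by blast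
  have q: "k \<cdot> g \<in> hom C Q (Dom C f)" using kp g comp_hom homD by metis
  have "f \<cdot> (k \<cdot> g) = (f \<cdot> k) \<cdot> g" using kp g homD by (intro assoc[symmetric]) auto
  hence z: "zero_map C (f \<cdot> (k \<cdot> g))" using zero_comp_r[OF kp(2)] g kp homD by auto
  have ex: "\<exists>!u. u \<in> hom C Q K \<and> k \<cdot> u = k \<cdot> g" using kk q z Q unfolding is_kernel_def by blast
  show ?thesis using ex g h e by metis
qed


lemma ker_ex:
  assumes f: "f \<in> hom C a b" shows "\<exists>K k. is_kernel C f K k"
proof -
  obtain z where z: "zero_obj C z" using ptd by blast
  have zo: "z \<in> Ob C" using z unfolding zero_obj_def initial_def by auto
  have tz: "\<forall>a\<in>Ob C. \<exists>!f. f \<in> hom C a z" using z unfolding zero_obj_def terminal_def by blast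
  have fa: "f \<in> Ar C" "Dom C f = a" "Cod C f = b" using f homD by auto
  have ob: "a \<in> Ob C" "b \<in> Ob C" using f hom_ob1 hom_ob2 by auto
  have "\<exists>P p1 p2. is_pullback C f (Z z b) P p1 p2"
    using fl unfolding has_finite_limits_def using fa zo ob by simp
  then obtain P p1 p2 where pb: "is_pullback C f (Z z b) P p1 p2" by blast
  note pp = pb_props[OF pb]
  have P: "P \<in> Ob C" using pb unfolding is_pullback_def by auto
  have p1: "p1 \<in> hom C P a" "p1 \<in> Ar C" "Dom C p1 = P" "Cod C p1 = a" using pp fa homD by auto
  have p2: "p2 \<in> hom C P z" "p2 \<in> Ar C" "Dom C p2 = P" "Cod C p2 = z" using pp zo ob homD by auto
  have fp: "f \<cdot> p1 = Z P b" using pp(3) p2 zo ob by simp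
  show ?thesis
  proof (intro exI)
    show "is_kernel C f P p1" unfolding is_kernel_def
    proof (intro conjI allI impI)
      show "f \<in> Ar C" "P \<in> Ob C" "p1 \<in> hom C P (Dom C f)" using fa P p1 by auto
      show "zero_map C (f \<cdot> p1)" using fp Z_prop P ob by simp
      fix Q q assume a: "Q \<in> Ob C \<and> q \<in> hom C Q (Dom C f) \<and> zero_map C (f \<cdot> q)"
      have q: "q \<in> hom C Q a" "q \<in> Ar C" "Dom C q = Q" "Cod C q = a" using a fa homD by auto
      have fq: "f \<cdot> q = Z Q b" using a zero_iff[of "f \<cdot> q" Q b] q fa comp_hom by metis
      have zq: "Z Q z \<in> hom C Q (Dom C (Z z b))" using Z_prop a zo ob by simp
      have "Z z b \<cdot> Z Q z = Z Q b" using a zo ob by simp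
      hence eq: "f \<cdot> q = Z z b \<cdot> Z Q z" using fq by simp
      have ex: "\<exists>!u. u \<in> hom C Q P \<and> p1 \<cdot> u = q \<and> p2 \<cdot> u = Z Q z"
        using pb a zq eq q unfolding is_pullback_def fa by blast
      then obtain u where u: "u \<in> hom C Q P" "p1 \<cdot> u = q" "p2 \<cdot> u = Z Q z" by blast
      show "\<exists>!u. u \<in> hom C Q P \<and> p1 \<cdot> u = q"
      proof (rule ex1I[of _ u])
        show "u \<in> hom C Q P \<and> p1 \<cdot> u = q" using u by blast
        fix v assume v: "v \<in> hom C Q P \<and> p1 \<cdot> v = q"
        have "p2 \<cdot> v \<in> hom C Q z" using v p2 comp_hom homD by metis
        moreover have "Z Q z \<in> hom C Q z" using Z_prop a zo by blast
        ultimately have "p2 \<cdot> v = Z Q z" using tz a by blast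
        thus "v = u" using ex v u by blast
      qed
    qed
  qed
qed

lemma iso_Id: "a \<in> Ob C \<Longrightarrow> iso C (Id C a)"
  unfolding iso_def using id_hom[of a] by (intro conjI bexI[of _ "Id C a"]) auto

lemma isoE: assumes "iso C v" shows "\<exists>g. g \<in> hom C (Cod C v) (Dom C v) \<and> v \<cdot> g = Id C (Cod C v)"
  using assms unfolding iso_def by blast

lemma split_zero:
  assumes p: "p \<in> hom C A B" and s: "s \<in> hom C B A" and ps: "p \<cdot> s = Id C B"
    and kp: "is_kernel C p Kp kq" and f: "f \<in> hom C A Zo"
    and fk: "zero_map C (f \<cdot> kq)" and fs: "zero_map C (f \<cdot> s)"
  shows "zero_map C f"
proof -
  obtain N n where n: "is_kernel C f N n" using ker_ex f by blast
  note nn = ker_props[OF n]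
  note kk = ker_props[OF kp]
  have pa: "p \<in> Ar C" "Dom C p = A" "Cod C p = B" using p homD by auto
  have sa: "s \<in> Ar C" "Dom C s = B" "Cod C s = A" using s homD by auto
  have fa: "f \<in> Ar C" "Dom C f = A" "Cod C f = Zo" using f homD by auto
  have na: "n \<in> hom C N A" "n \<in> Ar C" "Dom C n = N" "Cod C n = A" using nn fa homD by auto
  have ka: "kq \<in> hom C Kp A" "kq \<in> Ar C" "Dom C kq = Kp" "Cod C kq = A" using kk pa homD by auto
  obtain a where a: "a \<in> hom C Kp N" "n \<cdot> a = kq" using ker_factor[OF n] ka fk fa by metis
  obtain b where b: "b \<in> hom C B N" "n \<cdot> b = s" using ker_factor[OF n] s fs fa by metis
  have aa: "a \<in> Ar C" "Dom C a = Kp" "Cod C a = N" using a homD by auto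
  have ba: "b \<in> Ar C" "Dom C b = B" "Cod C b = N" using b homD by auto
  have pn: "p \<cdot> n \<in> hom C N B" using pa na homI by simp
  have pnb: "(p \<cdot> n) \<cdot> b = Id C B" using pa na ba b(2) ps by simp
  have pna: "(p \<cdot> n) \<cdot> a = p \<cdot> kq" using pa na aa a(2) by simp
  have kpn: "is_kernel C (p \<cdot> n) Kp a" unfolding is_kernel_def
  proof (intro conjI allI impI)
    show "p \<cdot> n \<in> Ar C" "Kp \<in> Ob C" "a \<in> hom C Kp (Dom C (p \<cdot> n))" using pa na kk a by auto
    show "zero_map C ((p \<cdot> n) \<cdot> a)" using pna kk by simp
    fix Q q assume as: "Q \<in> Ob C \<and> q \<in> hom C Q (Dom C (p \<cdot> n)) \<and> zero_map C ((p \<cdot> n) \<cdot> q)"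
    have qa: "q \<in> hom C Q N" "q \<in> Ar C" "Dom C q = Q" "Cod C q = N" using as pa na homD by auto
    have nq: "n \<cdot> q \<in> hom C Q (Dom C p)" using qa na pa homI by simp
    have "(p \<cdot> n) \<cdot> q = p \<cdot> (n \<cdot> q)" using qa na pa by simp
    hence "zero_map C (p \<cdot> (n \<cdot> q))" using as by simp
    then obtain u where u: "u \<in> hom C Q Kp" "kq \<cdot> u = n \<cdot> q" using ker_factor[OF kp nq] by blast
    have ua: "u \<in> Ar C" "Dom C u = Q" "Cod C u = Kp" using u homD by auto
    have "n \<cdot> (a \<cdot> u) = n \<cdot> q" using u(2) a(2) na aa ua by (simp flip: assoc)
    hence au: "a \<cdot> u = q" using ker_mono[OF n, of "a \<cdot> u" Q q] qa aa ua homI by simp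
    show "\<exists>!u. u \<in> hom C Q Kp \<and> a \<cdot> u = q"
    proof (rule ex1I[of _ u])
      show "u \<in> hom C Q Kp \<and> a \<cdot> u = q" using u au by blast
      fix v assume v: "v \<in> hom C Q Kp \<and> a \<cdot> v = q"
      have va: "v \<in> Ar C" "Dom C v = Q" "Cod C v = Kp" using v homD by auto
      have "kq \<cdot> v = (n \<cdot> a) \<cdot> v" using a(2) by simp
      also have "\<dots> = n \<cdot> q" using v na aa va by simp
      finally show "v = u" using ker_mono[OF kp, of v Q u] u v by simp
    qed
  qed
  have "iso C n"
  proof (rule ssf[unfolded split_short_five_def, rule_format, where p="p \<cdot> n" and K=Kp and k=a and A=N and B=B and s=b and p'=p and K'=Kp and k'=kq and A'=A and B'=B and s'=s and u="Id C Kp" and v=n and w="Id C B"], intro conjI)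
    show "is_kernel C (p \<cdot> n) Kp a" "is_kernel C p Kp kq" by fact+
    show "p \<cdot> n \<in> hom C N B" "b \<in> hom C B N" "(p \<cdot> n) \<cdot> b = Id C B" "p \<in> hom C A B" "s \<in> hom C B A"
      "p \<cdot> s = Id C B" "n \<in> hom C N A" by fact+
    show "Id C Kp \<in> hom C Kp Kp" "Id C B \<in> hom C B B" using id_hom kk pa by auto
    show "n \<cdot> a = kq \<cdot> Id C Kp" using a ka by simp
    show "p \<cdot> n = Id C B \<cdot> (p \<cdot> n)" using pa na by simp
    show "n \<cdot> b = s \<cdot> Id C B" using b sa by simp
    show "iso C (Id C Kp)" "iso C (Id C B)" using iso_Id kk pa by auto
  qed
  then obtain g where g: "g \<in> hom C A N" "n \<cdot> g = Id C A" using isoE na by metis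
  have ga: "g \<in> Ar C" "Dom C g = A" "Cod C g = N" using g homD by auto
  have "f = f \<cdot> (n \<cdot> g)" using g(2) fa by simp
  also have "\<dots> = (f \<cdot> n) \<cdot> g" using fa na ga by simp
  finally have ff: "f = (f \<cdot> n) \<cdot> g" .
  have "zero_map C ((f \<cdot> n) \<cdot> g)" using zero_comp_r[OF nn(2), of g] ga na fa by simp
  thus ?thesis using ff by simp
qed

lemma coprod_eq:
  assumes cp: "is_coproduct C a b S i1 i2" and h: "h \<in> hom C S Q" and h': "h' \<in> hom C S Q"
    and e1: "h \<cdot> i1 = h' \<cdot> i1" and e2: "h \<cdot> i2 = h' \<cdot> i2"
  shows "h = h'"
  using copair_unique[OF cp h] copair_unique[OF cp h'] e1 e2 by metis

lemma main:
  assumes w: "w \<in> hom C W A" and x: "x \<in> hom C X A" and y: "y \<in> hom C Y A" and mw: "mono C w"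
    and cpX: "is_coproduct C W X WX i1 i2" and cpY: "is_coproduct C W Y WY j1 j2"
    and pb0: "is_pullback C (copair C i1 i2 (Id C W) (zero_ar C X W))
                       (copair C j1 j2 (Id C W) (zero_ar C Y W)) P p1 p2"
    and im: "internal_mult C A w W x X y Y WX i1 i2 WY j1 j2 P p1 p2 m"
    and ckx: "is_cokernel C x QX cx" and cky: "is_cokernel C y QY cy"
    and L: "is_A3 C cx cy A3 q1 q2 q3"
    and kk: "is_kernel C (gamma C A w X x Y y i1 i2 j1 j2 p1 p2 q1 q2 q3) K k"
  shows "zero_map C (m \<cdot> k)"
proof -
  have obs: "W \<in> Ob C" "X \<in> Ob C" "Y \<in> Ob C" "A \<in> Ob C" "WX \<in> Ob C" "WY \<in> Ob C"
    using cpX cpY w unfolding is_coproduct_def using hom_ob2 by auto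
  have wa: "w \<in> Ar C" "Dom C w = W" "Cod C w = A" using w homD by auto
  have xa: "x \<in> Ar C" "Dom C x = X" "Cod C x = A" using x homD by auto
  have ya: "y \<in> Ar C" "Dom C y = Y" "Cod C y = A" using y homD by auto
  have ih: "i1 \<in> hom C W WX" "i2 \<in> hom C X WX" "j1 \<in> hom C W WY" "j2 \<in> hom C Y WY"
    using cpX cpY unfolding is_coproduct_def by auto
  have ia: "i1 \<in> Ar C" "Dom C i1 = W" "Cod C i1 = WX" "i2 \<in> Ar C" "Dom C i2 = X" "Cod C i2 = WX"
     "j1 \<in> Ar C" "Dom C j1 = W" "Cod C j1 = WY" "j2 \<in> Ar C" "Dom C j2 = Y" "Cod C j2 = WY"
    using ih homD by auto
  define rX where "rX = copair C i1 i2 (Id C W) (Z X W)"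
  define rY where "rY = copair C j1 j2 (Id C W) (Z Y W)"
  have rX: "rX \<in> hom C WX W" "rX \<cdot> i1 = Id C W" "rX \<cdot> i2 = Z X W"
    using copair[OF cpX, of "Id C W" W "Z X W"] id_hom Z_prop obs unfolding rX_def by auto
  have rY: "rY \<in> hom C WY W" "rY \<cdot> j1 = Id C W" "rY \<cdot> j2 = Z Y W"
    using copair[OF cpY, of "Id C W" W "Z Y W"] id_hom Z_prop obs unfolding rY_def by auto
  have ra: "rX \<in> Ar C" "Dom C rX = WX" "Cod C rX = W" "rY \<in> Ar C" "Dom C rY = WY" "Cod C rY = W"
    using rX rY homD by auto
  note pb = pb0[folded rX_def rY_def]
  note pp = pb_props[OF pb]
  have Pob: "P \<in> Ob C" using pb unfolding is_pullback_def by auto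
  have pa: "p1 \<in> Ar C" "Dom C p1 = P" "Cod C p1 = WX" "p2 \<in> Ar C" "Dom C p2 = P" "Cod C p2 = WY"
    using pp(1,2) ra homD by auto
  have sq: "rX \<cdot> p1 = rY \<cdot> p2" using pp by simp
  define cwx where "cwx = copair C i1 i2 w x"
  define cwy where "cwy = copair C j1 j2 w y"
  define cw0 where "cw0 = copair C i1 i2 w (Z X A)"
  have cwx: "cwx \<in> hom C WX A" "cwx \<cdot> i1 = w" "cwx \<cdot> i2 = x" using copair[OF cpX w x] unfolding cwx_def by auto
  have cwy: "cwy \<in> hom C WY A" "cwy \<cdot> j1 = w" "cwy \<cdot> j2 = y" using copair[OF cpY w y] unfolding cwy_def by auto
  have cw0: "cw0 \<in> hom C WX A" "cw0 \<cdot> i1 = w" "cw0 \<cdot> i2 = Z X A"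
    using copair[OF cpX w, of "Z X A"] Z_prop obs unfolding cw0_def by auto
  have ca: "cwx \<in> Ar C" "Dom C cwx = WX" "Cod C cwx = A" "cwy \<in> Ar C" "Dom C cwy = WY" "Cod C cwy = A"
    "cw0 \<in> Ar C" "Dom C cw0 = WX" "Cod C cw0 = A"
    using cwx cwy cw0 homD by auto
  have cw0_eq: "cw0 = w \<cdot> rX"
  proof (rule coprod_eq[OF cpX cw0(1)])
    show "w \<cdot> rX \<in> hom C WX A" using wa ra homI by simp
    show "cw0 \<cdot> i1 = (w \<cdot> rX) \<cdot> i1" using cw0 rX wa ra ia by simp
    show "cw0 \<cdot> i2 = (w \<cdot> rX) \<cdot> i2" using cw0 rX wa ra ia obs by simp
  qed
  have cw0Y: "cwy \<cdot> j1 = (w \<cdot> rY) \<cdot> j1" "(w \<cdot> rY) \<cdot> j2 = Z Y A" using cwy rY wa ra ia obs by simp_all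
  have cxh: "cx \<in> hom C A QX" "zero_map C (cx \<cdot> x)" "QX \<in> Ob C" using ckx xa unfolding is_cokernel_def by auto
  have cyh: "cy \<in> hom C A QY" "zero_map C (cy \<cdot> y)" "QY \<in> Ob C" using cky ya unfolding is_cokernel_def by auto
  have cxa: "cx \<in> Ar C" "Dom C cx = A" "Cod C cx = QX" "cy \<in> Ar C" "Dom C cy = A" "Cod C cy = QY"
    using cxh cyh homD by auto
  have cxx: "cx \<cdot> x = Z X QX" using cxh zero_iff[of "cx \<cdot> x" X QX] xa cxa homI by simp
  have cyy: "cy \<cdot> y = Z Y QY" using cyh zero_iff[of "cy \<cdot> y" Y QY] ya cxa homI by simp
  have e1: "cx \<cdot> cwx = cx \<cdot> cw0"
    by (rule coprod_eq[OF cpX, where Q=QX]) (use cxa ca cwx cw0 ia wa xa cxx obs cxh in \<open>simp_all add: homI\<close>)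
  have e2: "cy \<cdot> cwy = cy \<cdot> (w \<cdot> rY)"
    by (rule coprod_eq[OF cpY, where Q=QY]) (use cxa ca cwy rY ra ia wa ya cyy obs cyh in \<open>simp_all add: homI\<close>)
  note AR = wa xa ya ia ra pa ca cxa obs Pob
  note qp = A3_props[OF L]
  have A3ob: "A3 \<in> Ob C" using L unfolding is_A3_def by auto
  have qa: "q1 \<in> Ar C" "Dom C q1 = A3" "Cod C q1 = A" "q2 \<in> Ar C" "Dom C q2 = A3" "Cod C q2 = A"
     "q3 \<in> Ar C" "Dom C q3 = A3" "Cod C q3 = A" using qp(1-3) cxa homD by auto
  have r: "cwx \<cdot> p1 \<in> hom C P (Dom C cx)" "cw0 \<cdot> p1 \<in> hom C P (Dom C cx)" "cwy \<cdot> p2 \<in> hom C P (Dom C cx)"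
    using AR by (simp_all add: homI)
  have t1: "cx \<cdot> (cwx \<cdot> p1) = cx \<cdot> (cw0 \<cdot> p1)"
  proof -
    have "cx \<cdot> (cwx \<cdot> p1) = (cx \<cdot> cwx) \<cdot> p1" using AR by simp
    also have "\<dots> = (cx \<cdot> cw0) \<cdot> p1" by (simp only: e1)
    also have "\<dots> = cx \<cdot> (cw0 \<cdot> p1)" using AR by simp
    finally show ?thesis .
  qed
  have t2: "cy \<cdot> (cw0 \<cdot> p1) = cy \<cdot> (cwy \<cdot> p2)"
  proof -
    have "cy \<cdot> (cw0 \<cdot> p1) = cy \<cdot> (w \<cdot> (rX \<cdot> p1))" using AR cw0_eq by simp
    also have "\<dots> = cy \<cdot> (w \<cdot> (rY \<cdot> p2))" by (simp only: sq)
    also have "\<dots> = (cy \<cdot> (w \<cdot> rY)) \<cdot> p2" using AR by simp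
    also have "\<dots> = (cy \<cdot> cwy) \<cdot> p2" by (simp only: e2)
    also have "\<dots> = cy \<cdot> (cwy \<cdot> p2)" using AR by simp
    finally show ?thesis .
  qed
  define g where "g = gamma C A w X x Y y i1 i2 j1 j2 p1 p2 q1 q2 q3"
  have g_eq: "g = triple C q1 q2 q3 (cwx \<cdot> p1) (cw0 \<cdot> p1) (cwy \<cdot> p2)"
    unfolding g_def gamma_def cwx_def cw0_def cwy_def by simp
  have gt: "g \<in> hom C P A3" "q1 \<cdot> g = cwx \<cdot> p1" "q2 \<cdot> g = cw0 \<cdot> p1" "q3 \<cdot> g = cwy \<cdot> p2"
    using triple[OF L r t1 t2] unfolding g_eq by auto
  have gA: "g \<in> Ar C" "Dom C g = P" "Cod C g = A3" using gt homD by auto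
  note kk' = kk[folded g_def]
  note kp = ker_props[OF kk']
  have ka: "k \<in> Ar C" "Dom C k = K" "Cod C k = P" "K \<in> Ob C" using kp gA homD by auto
  have gk: "g \<cdot> k = Z K A3" using kp(2) zero_iff[of "g \<cdot> k" K A3] ka gA homI by simp
  note AR2 = AR qa gA ka A3ob
  have z1: "cwx \<cdot> (p1 \<cdot> k) = Z K A"
  proof -
    have "cwx \<cdot> (p1 \<cdot> k) = (q1 \<cdot> g) \<cdot> k" using AR2 gt by simp
    also have "\<dots> = q1 \<cdot> (g \<cdot> k)" using AR2 by simp
    finally show ?thesis using gk AR2 by simp
  qed
  have z2: "cw0 \<cdot> (p1 \<cdot> k) = Z K A"
  proof -
    have "cw0 \<cdot> (p1 \<cdot> k) = (q2 \<cdot> g) \<cdot> k" using AR2 gt by simp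
    also have "\<dots> = q2 \<cdot> (g \<cdot> k)" using AR2 by simp
    finally show ?thesis using gk AR2 by simp
  qed
  have z3: "cwy \<cdot> (p2 \<cdot> k) = Z K A"
  proof -
    have "cwy \<cdot> (p2 \<cdot> k) = (q3 \<cdot> g) \<cdot> k" using AR2 gt by simp
    also have "\<dots> = q3 \<cdot> (g \<cdot> k)" using AR2 by simp
    finally show ?thesis using gk AR2 by simp
  qed
  have rxk: "rX \<cdot> (p1 \<cdot> k) = Z K W"
  proof (rule monoD[OF mw])
    have "w \<cdot> (rX \<cdot> (p1 \<cdot> k)) = cw0 \<cdot> (p1 \<cdot> k)" using AR2 cw0_eq by simp
    thus "w \<cdot> (rX \<cdot> (p1 \<cdot> k)) = w \<cdot> Z K W" using z2 AR2 by simp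
  qed (use AR2 in simp_all)
  have ryk: "rY \<cdot> (p2 \<cdot> k) = Z K W"
  proof -
    have "rY \<cdot> (p2 \<cdot> k) = (rY \<cdot> p2) \<cdot> k" using AR2 by simp
    also have "\<dots> = (rX \<cdot> p1) \<cdot> k" by (simp only: sq)
    also have "\<dots> = rX \<cdot> (p1 \<cdot> k)" using AR2 by simp
    finally show ?thesis using rxk by simp
  qed
  define eX where "eX = pair C p1 p2 (Id C WX) (j1 \<cdot> rX)"
  define eY where "eY = pair C p1 p2 (i1 \<cdot> rY) (Id C WY)"
  have eX: "eX \<in> hom C WX P" "p1 \<cdot> eX = Id C WX" "p2 \<cdot> eX = j1 \<cdot> rX"
  proof -
    have "rX \<cdot> Id C WX = rY \<cdot> (j1 \<cdot> rX)"
    proof -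
      have "rY \<cdot> (j1 \<cdot> rX) = (rY \<cdot> j1) \<cdot> rX" using AR2 by simp
      thus ?thesis using rY AR2 by simp
    qed
    moreover have "Id C WX \<in> hom C WX (Dom C rX)" "j1 \<cdot> rX \<in> hom C WX (Dom C rY)" using AR2 id_hom by (simp_all add: homI)
    ultimately show "eX \<in> hom C WX P" "p1 \<cdot> eX = Id C WX" "p2 \<cdot> eX = j1 \<cdot> rX"
      using pair[OF pb, of "Id C WX" WX "j1 \<cdot> rX"] unfolding eX_def by auto
  qed
  have eY: "eY \<in> hom C WY P" "p1 \<cdot> eY = i1 \<cdot> rY" "p2 \<cdot> eY = Id C WY"
  proof -
    have "rX \<cdot> (i1 \<cdot> rY) = rY \<cdot> Id C WY"
    proof -
      have "rX \<cdot> (i1 \<cdot> rY) = (rX \<cdot> i1) \<cdot> rY" using AR2 by simp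
      thus ?thesis using rX AR2 by simp
    qed
    moreover have "Id C WY \<in> hom C WY (Dom C rY)" "i1 \<cdot> rY \<in> hom C WY (Dom C rX)" using AR2 id_hom by (simp_all add: homI)
    ultimately show "eY \<in> hom C WY P" "p1 \<cdot> eY = i1 \<cdot> rY" "p2 \<cdot> eY = Id C WY"
      using pair[OF pb, of "i1 \<cdot> rY" WY "Id C WY"] unfolding eY_def by auto
  qed
  have ea: "eX \<in> Ar C" "Dom C eX = WX" "Cod C eX = P" "eY \<in> Ar C" "Dom C eY = WY" "Cod C eY = P"
    using eX eY homD by auto
  have mm: "m \<in> hom C P A" "m \<cdot> eX = cwx" "m \<cdot> eY = cwy"
    using im unfolding internal_mult_def eX_def eY_def rX_def rY_def cwx_def cwy_def by auto
  have ma: "m \<in> Ar C" "Dom C m = P" "Cod C m = A" using mm homD by auto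
  note AR3 = AR2 ea ma
  define ek where "ek = eY \<cdot> (p2 \<cdot> k)"
  have eka: "ek \<in> Ar C" "Dom C ek = K" "Cod C ek = P" unfolding ek_def using AR3 by simp_all
  have p1ek: "p1 \<cdot> ek = Z K WX"
  proof -
    have "p1 \<cdot> ek = (p1 \<cdot> eY) \<cdot> (p2 \<cdot> k)" unfolding ek_def using AR3 by simp
    also have "\<dots> = (i1 \<cdot> rY) \<cdot> (p2 \<cdot> k)" by (simp only: eY)
    also have "\<dots> = i1 \<cdot> (rY \<cdot> (p2 \<cdot> k))" using AR3 by simp
    finally show ?thesis using ryk AR3 by simp
  qed
  have p2ek: "p2 \<cdot> ek = p2 \<cdot> k"
  proof -
    have "p2 \<cdot> ek = (p2 \<cdot> eY) \<cdot> (p2 \<cdot> k)" unfolding ek_def using AR3 by simp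
    thus ?thesis using eY AR3 by simp
  qed
  have gek: "g \<cdot> ek = Z K A3"
  proof (rule A3_eq[OF L])
    show "g \<cdot> ek \<in> hom C K A3" "Z K A3 \<in> hom C K A3" using AR3 eka by (simp_all add: homI)
    have "q1 \<cdot> (g \<cdot> ek) = (q1 \<cdot> g) \<cdot> ek" using AR3 eka by simp
    also have "\<dots> = (cwx \<cdot> p1) \<cdot> ek" by (simp only: gt)
    also have "\<dots> = cwx \<cdot> (p1 \<cdot> ek)" using AR3 eka by simp
    also have "\<dots> = cwx \<cdot> Z K WX" by (simp only: p1ek)
    finally show "q1 \<cdot> (g \<cdot> ek) = q1 \<cdot> Z K A3" using AR3 by simp
    have "q2 \<cdot> (g \<cdot> ek) = (q2 \<cdot> g) \<cdot> ek" using AR3 eka by simp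
    also have "\<dots> = (cw0 \<cdot> p1) \<cdot> ek" by (simp only: gt)
    also have "\<dots> = cw0 \<cdot> (p1 \<cdot> ek)" using AR3 eka by simp
    also have "\<dots> = cw0 \<cdot> Z K WX" by (simp only: p1ek)
    finally show "q2 \<cdot> (g \<cdot> ek) = q2 \<cdot> Z K A3" using AR3 by simp
    have "q3 \<cdot> (g \<cdot> ek) = (q3 \<cdot> g) \<cdot> ek" using AR3 eka by simp
    also have "\<dots> = (cwy \<cdot> p2) \<cdot> ek" by (simp only: gt)
    also have "\<dots> = cwy \<cdot> (p2 \<cdot> ek)" using AR3 eka by simp
    also have "\<dots> = cwy \<cdot> (p2 \<cdot> k)" by (simp only: p2ek)
    finally show "q3 \<cdot> (g \<cdot> ek) = q3 \<cdot> Z K A3" using AR3 z3 by simp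
  qed
  obtain t where t: "t \<in> hom C K K" "k \<cdot> t = ek"
  proof -
    have "ek \<in> hom C K (Dom C g)" using eka gA homI by simp
    moreover have "zero_map C (g \<cdot> ek)" using gek Z_prop AR3 by simp
    ultimately show ?thesis using ker_factor[OF kk'] that by blast
  qed
  have ta: "t \<in> Ar C" "Dom C t = K" "Cod C t = K" using t homD by auto
  have p1k: "p1 \<cdot> k \<in> hom C K WX" using AR3 homI by simp
  obtain B b where kb: "is_kernel C (p1 \<cdot> k) B b" using ker_ex[OF p1k] by blast
  note kbp = ker_props[OF kb]
  have ba: "b \<in> Ar C" "Dom C b = B" "Cod C b = K" "B \<in> Ob C" using kbp AR3 homD by auto
  have pkb: "p1 \<cdot> (k \<cdot> b) = Z B WX"
  proof -
    have "(p1 \<cdot> k) \<cdot> b \<in> hom C B WX" using AR3 ba homI by simp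
    hence "(p1 \<cdot> k) \<cdot> b = Z B WX" using kbp(2) zero_iff by blast
    thus ?thesis using AR3 ba by simp
  qed
  obtain pp where pp: "pp \<in> hom C K B" "b \<cdot> pp = t"
  proof -
    have "t \<in> hom C K (Dom C (p1 \<cdot> k))" using t AR3 by simp
    moreover have "(p1 \<cdot> k) \<cdot> t = Z K WX"
    proof -
      have "(p1 \<cdot> k) \<cdot> t = p1 \<cdot> (k \<cdot> t)" using AR3 ta by simp
      thus ?thesis using t(2) p1ek by simp
    qed
    hence "zero_map C ((p1 \<cdot> k) \<cdot> t)" using Z_prop AR3 by simp
    ultimately show ?thesis using ker_factor[OF kb] that by blast
  qed
  have ppa: "pp \<in> Ar C" "Dom C pp = K" "Cod C pp = B" using pp homD by auto
  note AR4 = AR3 eka ta ba ppa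
  have kb_eq: "k \<cdot> b = eY \<cdot> (p2 \<cdot> (k \<cdot> b))"
  proof (rule pb_eq[OF pb])
    show "k \<cdot> b \<in> hom C B P" "eY \<cdot> (p2 \<cdot> (k \<cdot> b)) \<in> hom C B P" using AR4 by (simp_all add: homI)
    have "p1 \<cdot> (eY \<cdot> (p2 \<cdot> (k \<cdot> b))) = (p1 \<cdot> eY) \<cdot> (p2 \<cdot> (k \<cdot> b))" using AR4 by simp
    also have "\<dots> = (i1 \<cdot> rY) \<cdot> (p2 \<cdot> (k \<cdot> b))" by (simp only: eY)
    also have "\<dots> = i1 \<cdot> ((rY \<cdot> (p2 \<cdot> k)) \<cdot> b)" using AR4 by simp
    also have "\<dots> = i1 \<cdot> (Z K W \<cdot> b)" by (simp only: ryk)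
    finally show "p1 \<cdot> (k \<cdot> b) = p1 \<cdot> (eY \<cdot> (p2 \<cdot> (k \<cdot> b)))" using pkb AR4 by simp
    have "p2 \<cdot> (eY \<cdot> (p2 \<cdot> (k \<cdot> b))) = (p2 \<cdot> eY) \<cdot> (p2 \<cdot> (k \<cdot> b))" using AR4 by simp
    thus "p2 \<cdot> (k \<cdot> b) = p2 \<cdot> (eY \<cdot> (p2 \<cdot> (k \<cdot> b)))" using eY AR4 by simp
  qed
  have tb: "t \<cdot> b = b"
  proof (rule ker_mono[OF kk'])
    show "t \<cdot> b \<in> hom C B K" "b \<in> hom C B K" using AR4 by (simp_all add: homI)
    have "k \<cdot> (t \<cdot> b) = (k \<cdot> t) \<cdot> b" using AR4 by simp
    also have "\<dots> = ek \<cdot> b" by (simp only: t)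
    also have "\<dots> = eY \<cdot> (p2 \<cdot> (k \<cdot> b))" unfolding ek_def using AR4 by simp
    finally show "k \<cdot> (t \<cdot> b) = k \<cdot> b" using kb_eq by simp
  qed
  have ppb: "pp \<cdot> b = Id C B"
  proof (rule ker_mono[OF kb])
    show "pp \<cdot> b \<in> hom C B B" "Id C B \<in> hom C B B" using AR4 by (simp_all add: homI)
    have "b \<cdot> (pp \<cdot> b) = (b \<cdot> pp) \<cdot> b" using AR4 by simp
    thus "b \<cdot> (pp \<cdot> b) = b \<cdot> Id C B" using pp tb AR4 by simp
  qed
  obtain Kp kq where kqk: "is_kernel C pp Kp kq" using ker_ex[OF pp(1)] by blast
  note kqp = ker_props[OF kqk]
  have kqa: "kq \<in> Ar C" "Dom C kq = Kp" "Cod C kq = K" "Kp \<in> Ob C" using kqp ppa homD by auto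
  note AR5 = AR4 kqa
  have ppkq: "pp \<cdot> kq = Z Kp B" using kqp(2) zero_iff[of "pp \<cdot> kq" Kp B] AR5 homI by simp
  have tkq: "t \<cdot> kq = Z Kp K"
  proof -
    have "t \<cdot> kq = (b \<cdot> pp) \<cdot> kq" using pp by simp
    also have "\<dots> = b \<cdot> (pp \<cdot> kq)" using AR5 by simp
    finally show ?thesis using ppkq AR5 by simp
  qed
  have p2kq: "p2 \<cdot> (k \<cdot> kq) = Z Kp WY"
  proof -
    have "p2 \<cdot> (k \<cdot> kq) = (p2 \<cdot> ek) \<cdot> kq" using p2ek AR5 by simp
    also have "\<dots> = p2 \<cdot> ((k \<cdot> t) \<cdot> kq)" using t AR5 by simp
    also have "\<dots> = p2 \<cdot> (k \<cdot> (t \<cdot> kq))" using AR5 by simp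
    finally show ?thesis using tkq AR5 by simp
  qed
  have kkq_eq: "k \<cdot> kq = eX \<cdot> (p1 \<cdot> (k \<cdot> kq))"
  proof (rule pb_eq[OF pb])
    show "k \<cdot> kq \<in> hom C Kp P" "eX \<cdot> (p1 \<cdot> (k \<cdot> kq)) \<in> hom C Kp P" using AR5 by (simp_all add: homI)
    have "p1 \<cdot> (eX \<cdot> (p1 \<cdot> (k \<cdot> kq))) = (p1 \<cdot> eX) \<cdot> (p1 \<cdot> (k \<cdot> kq))" using AR5 by simp
    thus "p1 \<cdot> (k \<cdot> kq) = p1 \<cdot> (eX \<cdot> (p1 \<cdot> (k \<cdot> kq)))" using eX AR5 by simp
    have "p2 \<cdot> (eX \<cdot> (p1 \<cdot> (k \<cdot> kq))) = (p2 \<cdot> eX) \<cdot> (p1 \<cdot> (k \<cdot> kq))" using AR5 by simp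
    also have "\<dots> = (j1 \<cdot> rX) \<cdot> (p1 \<cdot> (k \<cdot> kq))" by (simp only: eX)
    also have "\<dots> = j1 \<cdot> ((rX \<cdot> (p1 \<cdot> k)) \<cdot> kq)" using AR5 by simp
    also have "\<dots> = j1 \<cdot> (Z K W \<cdot> kq)" by (simp only: rxk)
    finally show "p2 \<cdot> (k \<cdot> kq) = p2 \<cdot> (eX \<cdot> (p1 \<cdot> (k \<cdot> kq)))" using p2kq AR5 by simp
  qed
  have f1: "zero_map C ((m \<cdot> k) \<cdot> kq)"
  proof -
    have "(m \<cdot> k) \<cdot> kq = m \<cdot> (k \<cdot> kq)" using AR5 by simp
    also have "\<dots> = m \<cdot> (eX \<cdot> (p1 \<cdot> (k \<cdot> kq)))" using kkq_eq by simp
    also have "\<dots> = (m \<cdot> eX) \<cdot> (p1 \<cdot> (k \<cdot> kq))" using AR5 by simp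
    also have "\<dots> = cwx \<cdot> (p1 \<cdot> (k \<cdot> kq))" by (simp only: mm)
    also have "\<dots> = (cwx \<cdot> (p1 \<cdot> k)) \<cdot> kq" using AR5 by simp
    also have "\<dots> = Z Kp A" using z1 AR5 by simp
    finally show ?thesis using Z_prop AR5 by simp
  qed
  have f2: "zero_map C ((m \<cdot> k) \<cdot> b)"
  proof -
    have "(m \<cdot> k) \<cdot> b = m \<cdot> (k \<cdot> b)" using AR5 by simp
    also have "\<dots> = m \<cdot> (eY \<cdot> (p2 \<cdot> (k \<cdot> b)))" using kb_eq by simp
    also have "\<dots> = (m \<cdot> eY) \<cdot> (p2 \<cdot> (k \<cdot> b))" using AR5 by simp
    also have "\<dots> = cwy \<cdot> (p2 \<cdot> (k \<cdot> b))" by (simp only: mm)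
    also have "\<dots> = (cwy \<cdot> (p2 \<cdot> k)) \<cdot> b" using AR5 by simp
    also have "\<dots> = Z B A" using z3 AR5 by simp
    finally show ?thesis using Z_prop AR5 by simp
  qed
  show ?thesis
    by (rule split_zero[OF pp(1) _ ppb kqk _ f1 f2, where Zo=A]) (use AR5 in \<open>simp_all add: homI\<close>)
qed
end

theorem lemma1p4:
  fixes C :: "('o,'a) cat"
  assumes "homological C" and "has_finite_colimits C"
    and "w \<in> hom C W A" and "x \<in> hom C X A" and "y \<in> hom C Y A" and "mono C w"
    and "is_coproduct C W X WX i1 i2" and "is_coproduct C W Y WY j1 j2"
    and "is_pullback C (copair C i1 i2 (Id C W) (zero_ar C X W))
                       (copair C j1 j2 (Id C W) (zero_ar C Y W)) P p1 p2"
    and "internal_mult C A w W x X y Y WX i1 i2 WY j1 j2 P p1 p2 m"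
    and "is_cokernel C x QX cx" and "is_cokernel C y QY cy"
    and "is_A3 C cx cy A3 q1 q2 q3"
    and "is_kernel C (gamma C A w X x Y y i1 i2 j1 j2 p1 p2 q1 q2 q3) K k"
  shows "zero_map C (Comp C m k)"
proof -
  interpret hc C by (rule hc.intro) (rule assms(1))
  show ?thesis by (rule main) (rule assms)+
qed

end
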